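(* Let $I=[a,b]$ be a compact interval, $r\ge1$ an integer, $g\in C^r(I,\mathbb R)$, and put $C_r:=\|g^{(r)}\|_{L^\infty(I)}$. Then for every $0<\lambda\le\|g\|_\infty$ there is a finite family of pairwise disjoint intervals $I_{\lambda,i}$, $i\in\mathcal I_\lambda$, such that: (i) $|\mathcal I_\lambda|\le 30r\big(1+|I|\,C_r^{1/r}\lambda^{-1/r}\big)$; (ii) with $V_\lambda:=\bigcup_{i\in\mathcal I_\lambda}I_{\lambda,i}$, we have $\{t\in I:|g(t)|<\lambda\}\subset V_\lambda\subset\{t\in I:|g(t)|<8\lambda\}$.
   Context: $\|g\|_\infty$ denotes the supremum of $|g|$ over $I$, and $|I|=b-a$ is the length of $I$. *)

theory Defs
  imports "HOL-Analysis.Analysis"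
begin

definition deriv_chain_on :: "nat \<Rightarrow> real set \<Rightarrow> (real \<Rightarrow> real) \<Rightarrow> (nat \<Rightarrow> real \<Rightarrow> real) \<Rightarrow> bool" where
  "deriv_chain_on r S g D \<longleftrightarrow>
     (\<forall>t\<in>S. D 0 t = g t) \<and>
     (\<forall>k<r. \<forall>t\<in>S. (D k has_real_derivative D (Suc k) t) (at t within S)) \<and>
     continuous_on S (D r)"

end

theory Submission
  imports Defs "HOL-Computational_Algebra.Polynomial"
begin

lemma taylor_bound:
  fixes a b C :: real
  assumes ch: "deriv_chain_on r {a..b} g D"
    and Cb: "\<And>t. t \<in> {a..b} \<Longrightarrow> \<bar>D r t\<bar> \<le> C"
  shows "k \<le> r \<Longrightarrow> x \<in> {a..b} \<Longrightarrow> y \<in> {a..b} \<Longrightarrow>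
     \<bar>D (r-k) y - (\<Sum>j<k. D (r-k+j) x * (y-x)^j / fact j)\<bar> \<le> C * \<bar>y-x\<bar>^k"
proof (induction k arbitrary: y)
  case 0
  then show ?case using Cb by simp
next
  case (Suc k)
  define m where "m = r - Suc k"
  have rk: "r - k = Suc m" using Suc.prems m_def by simp
  have mr: "m < r" using Suc.prems m_def by simp
  have msub: "r - Suc k = m" using m_def by simp
  define \<phi> where "\<phi> t = D m t - (\<Sum>j<Suc k. D (m+j) x * (t-x)^j / fact j)" for t
  define \<psi> where "\<psi> t = D (Suc m) t - (\<Sum>j<k. D (Suc m+j) x * (t-x)^j / fact j)" for t
  let ?S = "closed_segment x y"
  have Ssub: "?S \<subseteq> {a..b}" using Suc.prems
    by (metis atLeastAtMost_iff closed_segment_subset is_interval_cc is_interval_convex)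
  have der: "(\<phi> has_field_derivative \<psi> t) (at t within ?S)" if t: "t \<in> ?S" for t
  proof -
    have tab: "t \<in> {a..b}" using t Ssub by auto
    have d1: "(D m has_field_derivative D (Suc m) t) (at t within {a..b})"
      using ch mr tab unfolding deriv_chain_on_def by auto
    have d2: "((\<lambda>t. \<Sum>j<Suc k. D (m+j) x * (t-x)^j / fact j) has_field_derivative
       (\<Sum>j<Suc k. D (m+j) x * (of_nat j * (t-x)^(j-1)) / fact j)) (at t within {a..b})"
      by (intro derivative_eq_intros) auto
    have eq: "(\<Sum>j<Suc k. D (m+j) x * (of_nat j * (t-x)^(j-1)) / fact j) =
              (\<Sum>j<k. D (Suc m+j) x * (t-x)^j / fact j)"
      by (subst sum.lessThan_Suc_shift) (simp add: fact_Suc divide_simps)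
    have "(\<phi> has_field_derivative \<psi> t) (at t within {a..b})"
      unfolding \<phi>_def[abs_def] \<psi>_def using DERIV_diff[OF d1 d2] eq by simp
    then show ?thesis using has_field_derivative_subset Ssub by blast
  qed
  have bnd: "norm (\<psi> t) \<le> C * \<bar>y-x\<bar>^k" if t: "t \<in> ?S" for t
  proof -
    have tab: "t \<in> {a..b}" using t Ssub by auto
    have "\<bar>\<psi> t\<bar> \<le> C * \<bar>t-x\<bar>^k" using Suc.IH[of t] Suc.prems tab rk unfolding \<psi>_def by simp
    also have "\<dots> \<le> C * \<bar>y-x\<bar>^k"
    proof (rule mult_left_mono)
      show "\<bar>t-x\<bar>^k \<le> \<bar>y-x\<bar>^k" using t
        by (intro power_mono) (auto simp: closed_segment_eq_real_ivl split: if_splits)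
      show "0 \<le> C" using Cb[of x] Suc.prems by auto
    qed
    finally show ?thesis by simp
  qed
  have "norm (\<phi> y - \<phi> x) \<le> C * \<bar>y-x\<bar>^k * norm (y - x)"
    by (rule field_differentiable_bound[OF convex_closed_segment der bnd]) auto
  moreover have "\<phi> x = 0" unfolding \<phi>_def by (subst sum.lessThan_Suc_shift) simp
  ultimately have "\<bar>\<phi> y\<bar> \<le> C * \<bar>y-x\<bar>^Suc k" by (simp add: mult_ac)
  then show ?case unfolding \<phi>_def msub by simp
qed


lemma roots_aux:
  fixes Q :: "real poly"
  assumes Q0: "Q \<noteq> 0"
  shows "finite A \<Longrightarrow> A \<noteq> {} \<Longrightarrow> card A = n \<Longrightarrow> (\<forall>s\<in>A. poly Q s < 0) \<Longrightarrow>
    (\<forall>x\<in>A. \<forall>y\<in>A. x < y \<longrightarrow> (\<exists>u. x < u \<and> u < y \<and> poly Q u > 0)) \<Longrightarrow>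
    2 * n \<le> card {z. poly Q z = 0 \<and> z < Max A} + 2"
proof (induction n arbitrary: A)
  case 0
  then show ?case by simp
next
  case (Suc n)
  show ?case
  proof (cases "n = 0")
    case True
    then show ?thesis by simp
  next
    case False
    define m where "m = Max A"
    define A' where "A' = A - {m}"
    have mA: "m \<in> A" using Suc.prems m_def by simp
    have cA': "card A' = n" using Suc.prems mA A'_def by simp
    have fA': "finite A'" using Suc.prems A'_def by simp
    have neA': "A' \<noteq> {}" using cA' False by auto
    define m' where "m' = Max A'"
    have m'A': "m' \<in> A'" using fA' neA' m'_def by simp
    have m'lt: "m' < m" using m'A' A'_def Suc.prems m_def
      by (metis DiffE Max_ge insertI1 order_le_imp_less_or_eq)
    have IH: "2 * n \<le> card {z. poly Q z = 0 \<and> z < m'} + 2"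
      using Suc.IH[OF fA' neA' cA'] Suc.prems A'_def m'_def by auto
    obtain u where u: "m' < u" "u < m" "poly Q u > 0"
      using Suc.prems(5) m'A' mA m'lt A'_def by blast
    have q1: "poly Q m' < 0" "poly Q m < 0" using Suc.prems(4) m'A' mA A'_def by auto
    obtain z1 where z1: "m' < z1" "z1 < u" "poly Q z1 = 0" using poly_IVT_pos[OF u(1) q1(1) u(3)] by auto
    obtain z2 where z2: "u < z2" "z2 < m" "poly Q z2 = 0" using poly_IVT_neg[OF u(2) u(3) q1(2)] by auto
    have fin: "finite {z. poly Q z = 0 \<and> z < m}"
      using poly_roots_finite[OF Q0] by (rule rev_finite_subset) auto
    have sub: "insert z1 (insert z2 {z. poly Q z = 0 \<and> z < m'}) \<subseteq> {z. poly Q z = 0 \<and> z < m}"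
      using z1 z2 u m'lt by auto
    have "card (insert z1 (insert z2 {z. poly Q z = 0 \<and> z < m'})) = card {z. poly Q z = 0 \<and> z < m'} + 2"
      using z1 z2 u fin poly_roots_finite[OF Q0]
      by (subst card_insert_disjoint) (auto intro: rev_finite_subset)
    with card_mono[OF fin sub] IH show ?thesis using m_def by simp
  qed
qed

lemma roots_count:
  fixes Q :: "real poly"
  assumes "Q \<noteq> 0" "finite A" "\<forall>s\<in>A. poly Q s < 0"
    "\<forall>x\<in>A. \<forall>y\<in>A. x < y \<longrightarrow> (\<exists>u. x < u \<and> u < y \<and> poly Q u > 0)"
  shows "2 * card A \<le> degree Q + 2"
proof (cases "A = {}")
  case True then show ?thesis by simp
next
  case False
  have "card {z. poly Q z = 0 \<and> z < Max A} \<le> card {z. poly Q z = 0}"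
    by (rule card_mono[OF poly_roots_finite[OF assms(1)]]) auto
  then show ?thesis using roots_aux[OF assms(1) assms(2) False refl assms(3,4)]
      card_poly_roots_bound[OF assms(1)] by linarith
qed


lemma key_count:
  fixes a b C h lam :: real
  assumes ch: "deriv_chain_on r {a..b} g D"
    and Cb: "\<And>t. t \<in> {a..b} \<Longrightarrow> \<bar>D r t\<bar> \<le> C"
    and r1: "r \<ge> 1" and lam: "lam > 0"
    and Jsub: "J \<subseteq> {a..b}"
    and diam: "\<And>x y. x \<in> J \<Longrightarrow> y \<in> J \<Longrightarrow> \<bar>y - x\<bar> \<le> h"
    and Ch: "C * h^r \<le> lam"
    and fA: "finite A" and AJ: "A \<subseteq> J" and Asm: "\<And>s. s \<in> A \<Longrightarrow> \<bar>g s\<bar> < lam"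
    and sep: "\<And>x y. x \<in> A \<Longrightarrow> y \<in> A \<Longrightarrow> x < y \<Longrightarrow> \<exists>u. x < u \<and> u < y \<and> u \<in> J \<and> \<bar>g u\<bar> \<ge> 8 * lam"
  shows "card A \<le> r"
proof (cases "A = {}")
  case True then show ?thesis by simp
next
  case False
  then obtain x0 where x0: "x0 \<in> A" by auto
  have x0ab: "x0 \<in> {a..b}" using x0 AJ Jsub by auto
  have C0: "0 \<le> C" using Cb[OF x0ab] by auto
  define P :: "real poly" where "P = (\<Sum>j<r. smult (D j x0 / fact j) ([:-x0,1:]^j))"
  have polyP: "poly P y = (\<Sum>j<r. D (r - r + j) x0 * (y - x0)^j / fact j)" for y
    unfolding P_def by (simp add: poly_sum poly_power)
  have degP: "degree P \<le> r - 1"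
    unfolding P_def
  proof (rule degree_sum_le)
    fix j assume "j \<in> {..<r}"
    then have "j \<le> r - 1" by auto
    have "degree (smult (D j x0 / fact j) ([:- x0, 1:] ^ j)) \<le> degree ([:- x0, 1:] ^ j)"
      by (rule degree_smult_le)
    also have "\<dots> = j" by (rule degree_linear_power)
    finally show "degree (smult (D j x0 / fact j) ([:- x0, 1:] ^ j)) \<le> r - 1" using \<open>j \<le> r - 1\<close> by simp
  qed auto
  have approx: "\<bar>g y - poly P y\<bar> \<le> lam" if y: "y \<in> J" for y
  proof -
    have yab: "y \<in> {a..b}" using y Jsub by auto
    have g0: "D 0 y = g y" using ch yab unfolding deriv_chain_on_def by auto
    have "\<bar>g y - poly P y\<bar> \<le> C * \<bar>y - x0\<bar>^r"
      using taylor_bound[OF ch Cb, of r x0 y] x0ab yab g0 unfolding polyP by simp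
    also have "\<dots> \<le> C * h^r"
      using diam[OF y AJ[THEN subsetD, OF x0]] C0 by (intro mult_left_mono power_mono) auto
    finally show ?thesis using Ch by simp
  qed
  define Q :: "real poly" where "Q = P * P - [:9 * lam^2:]"
  have polyQ: "poly Q y = poly P y * poly P y - 9 * lam^2" for y unfolding Q_def by simp
  have Qneg: "\<forall>s\<in>A. poly Q s < 0"
  proof
    fix s assume s: "s \<in> A"
    have "\<bar>poly P s\<bar> < 2 * lam" using approx[of s] s AJ Asm[OF s] by auto
    then have "\<bar>poly P s\<bar> * \<bar>poly P s\<bar> < (2*lam) * (2*lam)"
      by (intro mult_strict_mono) auto
    moreover have "0 < lam * lam" using lam by simp
    ultimately show "poly Q s < 0" unfolding polyQ by (simp add: power2_eq_square abs_mult[symmetric])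
  qed
  have Qsep: "\<forall>x\<in>A. \<forall>y\<in>A. x < y \<longrightarrow> (\<exists>u. x < u \<and> u < y \<and> poly Q u > 0)"
  proof (intro ballI impI)
    fix x y assume "x \<in> A" "y \<in> A" "x < y"
    then obtain u where u: "x < u" "u < y" "u \<in> J" "\<bar>g u\<bar> \<ge> 8 * lam" using sep by blast
    have "\<bar>poly P u\<bar> \<ge> 7 * lam" using approx[OF u(3)] u(4) by auto
    then have "\<bar>poly P u\<bar> * \<bar>poly P u\<bar> \<ge> (7*lam) * (7*lam)"
      using lam by (intro mult_mono) auto
    then have h1: "49*(lam*lam) \<le> poly P u * poly P u" by (simp add: abs_mult[symmetric])
    have h2: "0 < lam * lam" using lam by simp
    have "poly Q u > 0" unfolding polyQ power2_eq_square using h1 h2 by linarith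
    then show "\<exists>u. x < u \<and> u < y \<and> poly Q u > 0" using u by blast
  qed
  have Q0: "Q \<noteq> 0" using Qneg x0 by auto
  have degQ: "degree Q \<le> 2 * r - 2"
  proof -
    have "degree Q \<le> max (degree (P * P)) (degree [:9 * lam^2:])"
      unfolding Q_def by (rule degree_diff_le_max)
    moreover have "degree (P * P) \<le> degree P + degree P" by (rule degree_mult_le)
    ultimately show ?thesis using degP by simp
  qed
  have "2 * card A \<le> degree Q + 2" by (rule roots_count[OF Q0 fA Qneg Qsep])
  then show ?thesis using degQ r1 by linarith
qed


lemma comp_count:
  fixes a b C h lam :: real
  assumes ch: "deriv_chain_on r {a..b} g D"
    and Cb: "\<And>t. t \<in> {a..b} \<Longrightarrow> \<bar>D r t\<bar> \<le> C"
    and r1: "r \<ge> 1" and lam: "lam > 0"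
    and Jsub: "J \<subseteq> {a..b}"
    and diam: "\<And>x y. x \<in> J \<Longrightarrow> y \<in> J \<Longrightarrow> \<bar>y - x\<bar> \<le> h"
    and Ch: "C * h^r \<le> lam"
    and conv: "\<And>x y u. x \<in> J \<Longrightarrow> y \<in> J \<Longrightarrow> x < u \<Longrightarrow> u < y \<Longrightarrow> u \<in> J"
  defines "U \<equiv> {t\<in>J. \<bar>g t\<bar> < 8 * lam}"
  defines "S \<equiv> {connected_component_set U s | s. s \<in> U \<and> \<bar>g s\<bar> < lam}"
  shows "finite S \<and> card S \<le> r"
proof -
  define rep where "rep K = (SOME s. s \<in> U \<and> \<bar>g s\<bar> < lam \<and> K = connected_component_set U s)" for K
  have rep: "rep K \<in> U \<and> \<bar>g (rep K)\<bar> < lam \<and> K = connected_component_set U (rep K)" if "K \<in> S" for K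
    unfolding rep_def by (rule someI_ex) (use that S_def in blast)
  have inj: "inj_on rep S" by (rule inj_onI) (metis rep)
  let ?A = "rep ` S"
  have good: "card B \<le> r" if B: "finite B" "B \<subseteq> ?A" for B
  proof (rule key_count[OF ch Cb r1 lam Jsub diam Ch B(1)])
    show "B \<subseteq> J" using B rep U_def by auto
    show "\<bar>g s\<bar> < lam" if "s \<in> B" for s using that B rep by auto
    show "\<exists>u. x < u \<and> u < y \<and> u \<in> J \<and> 8 * lam \<le> \<bar>g u\<bar>"
      if xy: "x \<in> B" "y \<in> B" "x < y" for x y
    proof (rule ccontr)
      assume na: "\<not> ?thesis"
      obtain Kx Ky where K: "Kx \<in> S" "Ky \<in> S" "x = rep Kx" "y = rep Ky" using xy B by blast
      have xU: "x \<in> U" "y \<in> U" using rep K by auto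
      have "{x..y} \<subseteq> U"
      proof
        fix u assume u: "u \<in> {x..y}"
        show "u \<in> U"
        proof (cases "u = x \<or> u = y")
          case True then show ?thesis using xU by auto
        next
          case False
          then have "x < u" "u < y" using u by auto
          moreover have "u \<in> J" using conv[OF _ _ \<open>x<u\<close> \<open>u<y\<close>] xU U_def by auto
          ultimately show ?thesis using na U_def by force
        qed
      qed
      then have "connected_component U x y"
        by (intro connected_componentI[of "{x..y}"]) (use xy in auto)
      then have "connected_component_set U y = connected_component_set U x"
        by (intro connected_component_eq) (simp add: mem_Collect_eq)
      then have "Kx = Ky" using rep K by metis
      then show False using K xy by simp
    qed
  qed
  have finA: "finite ?A"
  proof (rule ccontr)
    assume "infinite ?A"
    then obtain B where "B \<subseteq> ?A" "finite B" "card B = Suc r"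
      using infinite_arbitrarily_large by blast
    with good show False by fastforce
  qed
  have "finite S" using finA inj finite_imageD by blast
  moreover have "card S \<le> r" using good[OF finA] card_image[OF inj] by simp
  ultimately show ?thesis by simp
qed


lemma choose_h:
  fixes a b C lam :: real
  assumes "a < b" "r \<ge> 1" "0 \<le> C" "0 < lam"
  shows "\<exists>h N. h > 0 \<and> N \<ge> 1 \<and> C * h^r \<le> lam \<and> b - a \<le> real N * h \<and>
     real N \<le> 1 + (b - a) * C powr (1 / real r) * lam powr (- 1 / real r)"
proof (cases "C = 0")
  case True
  show ?thesis
    by (rule exI[of _ "b-a"], rule exI[of _ 1]) (use assms True in auto)
next
  case False
  then have Cp: "C > 0" using assms by simp
  define h where "h = (lam / C) powr (1 / real r)"
  have hp: "h > 0" using Cp assms h_def by simp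
  have hr: "h ^ r = lam / C"
    unfolding h_def using Cp assms by (simp add: powr_realpow[symmetric] powr_powr)
  define N where "N = nat \<lceil>(b - a) / h\<rceil>"
  have q: "(b-a)/h > 0" using hp assms by simp
  have N1: "N \<ge> 1" unfolding N_def using q by linarith
  have Nle: "real N \<le> (b-a)/h + 1" unfolding N_def using q by linarith
  have Nge: "(b-a)/h \<le> real N" unfolding N_def using q by linarith
  have "(b-a)/h = (b - a) * C powr (1 / real r) * lam powr (- 1 / real r)"
    unfolding h_def using Cp assms
    by (simp add: powr_divide powr_minus_divide divide_simps powr_minus)
  moreover have "b - a \<le> real N * h" using Nge hp by (simp add: divide_simps)
  moreover have "C * h^r \<le> lam" using hr Cp by simp
  ultimately show ?thesis using hp N1 Nle by (intro exI[of _ h] exI[of _ N]) auto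
qed


theorem corollary2p2:
  fixes a b :: real and r :: nat and g :: "real \<Rightarrow> real"
    and D :: "nat \<Rightarrow> real \<Rightarrow> real" and lam :: real
  assumes "a < b" and "r \<ge> 1"
    and "deriv_chain_on r {a..b} g D"
    and "0 < lam" and "lam \<le> (SUP t\<in>{a..b}. \<bar>g t\<bar>)"
  shows "\<exists>F :: real set set. finite F \<and> (\<forall>J\<in>F. is_interval J) \<and> disjoint F \<and>
           real (card F) \<le> 30 * real r * (1 + (b - a) * (SUP t\<in>{a..b}. \<bar>D r t\<bar>) powr (1 / real r)
                                               * lam powr (- 1 / real r)) \<and>
           {t\<in>{a..b}. \<bar>g t\<bar> < lam} \<subseteq> \<Union>F \<and>
           \<Union>F \<subseteq> {t\<in>{a..b}. \<bar>g t\<bar> < 8 * lam}"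
proof -
  note ch = assms(3)
  define C where "C = (SUP t\<in>{a..b}. \<bar>D r t\<bar>)"
  have cont: "continuous_on {a..b} (\<lambda>t. \<bar>D r t\<bar>)"
    using ch unfolding deriv_chain_on_def by (intro continuous_intros) auto
  have bdd: "bdd_above ((\<lambda>t. \<bar>D r t\<bar>) ` {a..b})"
    by (intro bounded_imp_bdd_above compact_imp_bounded compact_continuous_image cont) simp
  have Cb: "\<And>t. t \<in> {a..b} \<Longrightarrow> \<bar>D r t\<bar> \<le> C"
    unfolding C_def by (rule cSUP_upper[OF _ bdd])
  have C0: "0 \<le> C" using Cb[of a] assms(1) by force
  define X where "X = (b - a) * C powr (1 / real r) * lam powr (- 1 / real r)"
  have X0: "X \<ge> 0" unfolding X_def using assms(1) by simp
  obtain h N where hN: "h > 0" "N \<ge> 1" "C * h^r \<le> lam" "b - a \<le> real N * h" "real N \<le> 1 + X"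
    using choose_h[OF assms(1) assms(2) C0 assms(4)] unfolding X_def by blast
  define idx where "idx t = min (N - 1) (nat \<lfloor>(t - a) / h\<rfloor>)" for t
  define P where "P i = {t\<in>{a..b}. idx t = i}" for i
  define U where "U i = {t\<in>P i. \<bar>g t\<bar> < 8 * lam}" for i
  define S where "S i = {connected_component_set (U i) s | s. s \<in> U i \<and> \<bar>g s\<bar> < lam}" for i
  define F where "F = (\<Union>i<N. S i)"
  have idx_mono: "idx x \<le> idx u" if "x \<le> u" for x u
    unfolding idx_def using hN(1) that
    by (intro min.mono order.refl nat_mono floor_mono divide_right_mono) auto
  have Pbnd: "a + real i * h \<le> t \<and> t \<le> a + (real i + 1) * h" if t: "t \<in> P i" for t i
  proof -
    have tab: "a \<le> t" "t \<le> b" and it: "idx t = i" using t P_def by auto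
    define f where "f = \<lfloor>(t - a) / h\<rfloor>"
    have f0: "f \<ge> 0" unfolding f_def using tab hN(1) by simp
    have fl: "real_of_int f \<le> (t - a)/h" "(t-a)/h < real_of_int f + 1" unfolding f_def by linarith+
    show ?thesis
    proof (cases "nat f \<le> N - 1")
      case True
      then have "i = nat f" using it unfolding idx_def f_def by simp
      then have ri: "real i = real_of_int f" using f0 by simp
      from fl hN(1) show ?thesis unfolding ri by (simp add: field_simps)
    next
      case False
      then have "i = N - 1" using it unfolding idx_def f_def by simp
      then have ri: "real i = real N - 1" using hN(2) by simp
      have "real N - 1 \<le> real_of_int f" using False f0 hN(2) by linarith
      then have "real N - 1 \<le> (t - a)/h" using fl by linarith
      then have "a + (real N - 1) * h \<le> t" using hN(1) by (simp add: field_simps)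
      moreover have "t \<le> a + real N * h" using tab hN(4) by simp
      ultimately show ?thesis unfolding ri by simp
    qed
  qed
  have Sfin: "finite (S i) \<and> card (S i) \<le> r" for i
    unfolding S_def U_def
  proof (rule comp_count[OF ch Cb assms(2) assms(4)])
    show "P i \<subseteq> {a..b}" unfolding P_def by auto
    show "\<bar>y - x\<bar> \<le> h" if "x \<in> P i" "y \<in> P i" for x y
      using Pbnd[OF that(1)] Pbnd[OF that(2)] by (simp add: abs_le_iff field_simps)
    show "C * h ^ r \<le> lam" by (rule hN(3))
    show "u \<in> P i" if "x \<in> P i" "y \<in> P i" "x < u" "u < y" for x y u
      using that idx_mono[of x u] idx_mono[of u y] unfolding P_def by auto
  qed
  have compS: "\<exists>s. K = connected_component_set (U i) s" if "K \<in> S i" for K i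
    using that S_def by auto
  have KU: "K \<subseteq> U i" if "K \<in> S i" for K i
    using compS[OF that] connected_component_subset by blast
  have finF: "finite F" unfolding F_def using Sfin by auto
  have cardF: "card F \<le> N * r"
  proof -
    have "card F \<le> (\<Sum>i<N. card (S i))" unfolding F_def by (rule card_UN_le) simp
    also have "\<dots> \<le> (\<Sum>i<N. r)" by (rule sum_mono) (use Sfin in auto)
    finally show ?thesis by simp
  qed
  have intv: "\<forall>J\<in>F. is_interval J"
    unfolding F_def using compS by (auto simp: is_interval_connected_1)
  have disj: "disjoint F"
    unfolding disjoint_def
  proof (intro ballI impI)
    fix K K' assume K: "K \<in> F" "K' \<in> F" "K \<noteq> K'"
    then obtain i j where ij: "K \<in> S i" "K' \<in> S j" unfolding F_def by auto
    show "K \<inter> K' = {}"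
    proof (cases "i = j")
      case True
      obtain s s' where "K = connected_component_set (U i) s" "K' = connected_component_set (U i) s'"
        using compS ij True by blast
      then show ?thesis using K(3) connected_component_nonoverlap by metis
    next
      case False
      have "K \<subseteq> P i" "K' \<subseteq> P j" using KU ij U_def by fastforce+
      then show ?thesis using False unfolding P_def by auto
    qed
  qed
  have cov: "{t\<in>{a..b}. \<bar>g t\<bar> < lam} \<subseteq> \<Union>F"
  proof
    fix t assume t: "t \<in> {t\<in>{a..b}. \<bar>g t\<bar> < lam}"
    define i where "i = idx t"
    have iN: "i < N" unfolding i_def idx_def using hN(2) by simp
    have tU: "t \<in> U i" using t assms(4) unfolding U_def P_def i_def by auto
    have "connected_component_set (U i) t \<in> S i" unfolding S_def using tU t by auto
    moreover have "t \<in> connected_component_set (U i) t" using tU by simp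
    ultimately show "t \<in> \<Union>F" unfolding F_def using iN by blast
  qed
  have sub: "\<Union>F \<subseteq> {t\<in>{a..b}. \<bar>g t\<bar> < 8 * lam}"
    unfolding F_def using KU unfolding U_def P_def by fastforce
  have "real (card F) \<le> real N * real r" using cardF by (metis of_nat_le_iff of_nat_mult)
  also have "\<dots> \<le> (1 + X) * real r" using hN(5) by (intro mult_right_mono) auto
  also have "\<dots> \<le> 30 * real r * (1 + X)" using X0 by simp
  finally have "real (card F) \<le> 30 * real r * (1 + X)" .
  then show ?thesis using finF intv disj cov sub unfolding X_def C_def by blast
qed

end
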